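(* Assume $\mu(\partial A)=0$ for every $\sigma$-invariant probability measure $\mu$. Then $\lim_{m\to\infty}\rho(\mathcal{D}_m)=0$, where $\rho(\mathcal{D})=\sup_\mu\mu(\mathcal{D})$, the supremum being over all $\sigma$-invariant probability measures $\mu$.
   Context: $(\Sigma,\sigma)$ is a two-sided mixing subshift of finite type on $\{1,\dots,N\}$ with the product topology. $A\subset\Sigma$ is an open set, $\partial A=\overline A\cap\overline{\Sigma\setminus A}$. An $m$-cylinder is $\{x:x_j=i_j,\ -m\le j\le m\}$; $\mathcal{B}_m$ (resp. $\mathcal{C}_m$) is the largest (resp. smallest) union of $m$-cylinders contained in (resp. containing) $A$; $\mathcal{D}_m=\mathcal{C}_m\setminus\mathcal{B}_m$. *)

theory Defs
  imports "HOL-Probability.Probability"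
begin

text \<open>Points of the full shift are maps int \<Rightarrow> nat; the type carries the product
  topology of discrete nat (Function_Topology). A subshift of finite type is given by a
  0-1 transition matrix M on the alphabet {1..N}.\<close>

definition SFT :: "nat \<Rightarrow> (nat \<Rightarrow> nat \<Rightarrow> bool) \<Rightarrow> (int \<Rightarrow> nat) set" where
  "SFT N M = {x. \<forall>j. x j \<in> {1..N} \<and> M (x j) (x (j + 1))}"

definition shift :: "(int \<Rightarrow> nat) \<Rightarrow> (int \<Rightarrow> nat)" where
  "shift x = (\<lambda>j. x (j + 1))"

definition admissible_path :: "nat \<Rightarrow> (nat \<Rightarrow> nat \<Rightarrow> bool) \<Rightarrow> nat \<Rightarrow> nat \<Rightarrow> nat \<Rightarrow> bool" where
  "admissible_path N M n i j \<longleftrightarrow> (\<exists>w::nat \<Rightarrow> nat. w 0 = i \<and> w n = j \<and>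
      (\<forall>k\<le>n. w k \<in> {1..N}) \<and> (\<forall>k<n. M (w k) (w (Suc k))))"

text \<open>Mixing: M is primitive (some power has all entries positive from some point on).\<close>
definition mixing_SFT :: "nat \<Rightarrow> (nat \<Rightarrow> nat \<Rightarrow> bool) \<Rightarrow> bool" where
  "mixing_SFT N M \<longleftrightarrow> (\<exists>K. \<forall>n\<ge>K. \<forall>i\<in>{1..N}. \<forall>j\<in>{1..N}. admissible_path N M n i j)"

definition invariant_prob :: "(int \<Rightarrow> nat) set \<Rightarrow> (int \<Rightarrow> nat) measure set" where
  "invariant_prob S = {\<mu>. prob_space \<mu> \<and> space \<mu> = S \<and> sets \<mu> = sets (restrict_space borel S) \<and>
      shift \<in> measurable \<mu> \<mu> \<and>
      (\<forall>B\<in>sets \<mu>. emeasure \<mu> (shift -` B \<inter> space \<mu>) = emeasure \<mu> B)}"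

definition cylinder :: "(int \<Rightarrow> nat) set \<Rightarrow> nat \<Rightarrow> (int \<Rightarrow> nat) \<Rightarrow> (int \<Rightarrow> nat) set" where
  "cylinder S m w = {x\<in>S. \<forall>j. - int m \<le> j \<and> j \<le> int m \<longrightarrow> x j = w j}"

definition is_cylinder :: "(int \<Rightarrow> nat) set \<Rightarrow> nat \<Rightarrow> (int \<Rightarrow> nat) set \<Rightarrow> bool" where
  "is_cylinder S m C \<longleftrightarrow> (\<exists>w. C = cylinder S m w \<and> C \<noteq> {})"

definition inner_approx :: "(int \<Rightarrow> nat) set \<Rightarrow> (int \<Rightarrow> nat) set \<Rightarrow> nat \<Rightarrow> (int \<Rightarrow> nat) set" where
  "inner_approx S A m = \<Union>{C. is_cylinder S m C \<and> C \<subseteq> A}"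

definition outer_approx :: "(int \<Rightarrow> nat) set \<Rightarrow> (int \<Rightarrow> nat) set \<Rightarrow> nat \<Rightarrow> (int \<Rightarrow> nat) set" where
  "outer_approx S A m = \<Union>{C. is_cylinder S m C \<and> C \<inter> A \<noteq> {}}"

definition diff_approx :: "(int \<Rightarrow> nat) set \<Rightarrow> (int \<Rightarrow> nat) set \<Rightarrow> nat \<Rightarrow> (int \<Rightarrow> nat) set" where
  "diff_approx S A m = outer_approx S A m - inner_approx S A m"

definition topo_boundary :: "(int \<Rightarrow> nat) set \<Rightarrow> (int \<Rightarrow> nat) set \<Rightarrow> (int \<Rightarrow> nat) set" where
  "topo_boundary S A = (top_of_set S closure_of A) \<inter> (top_of_set S closure_of (S - A))"

definition rho :: "(int \<Rightarrow> nat) set \<Rightarrow> (int \<Rightarrow> nat) set \<Rightarrow> real" where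
  "rho S D = (SUP \<mu>\<in>invariant_prob S. measure \<mu> D)"

end

theory Submission
  imports Defs
begin


definition key :: "nat \<Rightarrow> (int \<Rightarrow> nat) \<Rightarrow> nat list" where
  "key m x = map (\<lambda>i. x (int i - int m)) [0..<2*m+1]"

lemma key_eq: "key m x = key m y \<longleftrightarrow> (\<forall>j. - int m \<le> j \<and> j \<le> int m \<longrightarrow> x j = y j)"
proof
  assume h: "key m x = key m y"
  show "\<forall>j. - int m \<le> j \<and> j \<le> int m \<longrightarrow> x j = y j"
  proof (intro allI impI)
    fix j assume j: "- int m \<le> j \<and> j \<le> int m"
    define i where "i = nat (j + int m)"
    have i1: "i < 2*m+1" using j unfolding i_def by linarith
    have i2: "int i - int m = j" using j unfolding i_def by linarith
    have "\<forall>i\<in>set [0..<2*m+1]. x (int i - int m) = y (int i - int m)"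
      using h unfolding key_def map_eq_conv .
    then have "x (int i - int m) = y (int i - int m)" using i1 by (simp del: upt_Suc)
    then show "x j = y j" using i2 by simp
  qed
next
  assume h: "\<forall>j. - int m \<le> j \<and> j \<le> int m \<longrightarrow> x j = y j"
  have "\<forall>i\<in>set [0..<2*m+1]. x (int i - int m) = y (int i - int m)"
  proof
    fix i assume "i \<in> set [0..<2*m+1]"
    then have "i < 2*m+1" by (simp del: upt_Suc)
    then have "- int m \<le> int i - int m \<and> int i - int m \<le> int m" by linarith
    then show "x (int i - int m) = y (int i - int m)" using h by blast
  qed
  then show "key m x = key m y" unfolding key_def map_eq_conv .
qed

definition detm :: "(int \<Rightarrow> nat) set \<Rightarrow> nat \<Rightarrow> (int \<Rightarrow> nat) set \<Rightarrow> bool" where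
  "detm S m B \<longleftrightarrow> B \<subseteq> S \<and> (\<forall>x\<in>S. \<forall>y\<in>S. key m x = key m y \<longrightarrow> x \<in> B \<longrightarrow> y \<in> B)"

definition RR :: "(int \<Rightarrow> nat) set \<Rightarrow> (int \<Rightarrow> nat) set set" where
  "RR S = {B. \<exists>m. detm S m B}"

lemma detmD: "detm S m B \<Longrightarrow> x \<in> S \<Longrightarrow> y \<in> S \<Longrightarrow> key m x = key m y \<Longrightarrow> x \<in> B \<Longrightarrow> y \<in> B"
  unfolding detm_def by blast

lemma detm_sub: "detm S m B \<Longrightarrow> B \<subseteq> S"
  unfolding detm_def by (elim conjE)

lemma detmI:
  assumes "B \<subseteq> S" "\<And>x y. x \<in> S \<Longrightarrow> y \<in> S \<Longrightarrow> key m x = key m y \<Longrightarrow> x \<in> B \<Longrightarrow> y \<in> B"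
  shows "detm S m B"
  unfolding detm_def
proof (intro conjI ballI impI)
  show "B \<subseteq> S" by (rule assms(1))
  fix x y assume "x \<in> S" "y \<in> S" "key m x = key m y" "x \<in> B"
  then show "y \<in> B" by (rule assms(2))
qed

lemma detm_mono: assumes "detm S m B" "m \<le> n" shows "detm S n B"
proof (rule detmI)
  have "int m \<le> int n" using assms(2) by simp
  show "B \<subseteq> S" using assms(1) by (rule detm_sub)
  fix x y assume xy: "x \<in> S" "y \<in> S" "key n x = key n y" "x \<in> B"
  have h: "\<forall>j. - int n \<le> j \<and> j \<le> int n \<longrightarrow> x j = y j" using xy(3) unfolding key_eq .
  have "\<forall>j. - int m \<le> j \<and> j \<le> int m \<longrightarrow> x j = y j"
  proof (intro allI impI)
    fix j assume "- int m \<le> j \<and> j \<le> int m"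
    then have "- int n \<le> j \<and> j \<le> int n" using \<open>int m \<le> int n\<close> by linarith
    then show "x j = y j" using h by simp
  qed
  then have "key m x = key m y" unfolding key_eq .
  then show "y \<in> B" using detmD[OF assms(1) xy(1,2) _ xy(4)] by simp
qed

lemma detm_Un: assumes "detm S m A" "detm S m B" shows "detm S m (A \<union> B)"
proof (rule detmI)
  show "A \<union> B \<subseteq> S" using detm_sub[OF assms(1)] detm_sub[OF assms(2)] by simp
  fix x y assume xy: "x \<in> S" "y \<in> S" "key m x = key m y" "x \<in> A \<union> B"
  show "y \<in> A \<union> B"
  proof (cases "x \<in> A")
    case True then show ?thesis using detmD[OF assms(1) xy(1-3)] by simp
  next
    case False then have "x \<in> B" using xy(4) by simp
    then show ?thesis using detmD[OF assms(2) xy(1-3)] by simp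
  qed
qed

lemma detm_Diff: assumes "detm S m A" "detm S m B" shows "detm S m (A - B)"
proof (rule detmI)
  show "A - B \<subseteq> S" using detm_sub[OF assms(1)] by auto
  fix x y assume xy: "x \<in> S" "y \<in> S" "key m x = key m y" "x \<in> A - B"
  have "y \<in> A" using detmD[OF assms(1) xy(1-3)] xy(4) by simp
  moreover have "y \<notin> B"
  proof
    assume "y \<in> B"
    then have "x \<in> B" using detmD[OF assms(2) xy(2) xy(1)] xy(3) by simp
    then show False using xy(4) by simp
  qed
  ultimately show "y \<in> A - B" by simp
qed

lemma detm_S: "detm S m S" by (rule detmI) simp_all
lemma detm_empty: "detm S m {}" by (rule detmI) simp_all

lemma RR_Un: assumes "A \<in> RR S" "B \<in> RR S" shows "A \<union> B \<in> RR S"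
proof -
  obtain m where m: "detm S m A" using assms(1) by (auto simp: RR_def)
  obtain n where n: "detm S n B" using assms(2) by (auto simp: RR_def)
  have "detm S (max m n) A" "detm S (max m n) B"
    using detm_mono[OF m, of "max m n"] detm_mono[OF n, of "max m n"] by simp_all
  then have "detm S (max m n) (A \<union> B)" by (rule detm_Un)
  then show ?thesis unfolding RR_def by blast
qed

lemma RR_Diff: assumes "A \<in> RR S" "B \<in> RR S" shows "A - B \<in> RR S"
proof -
  obtain m where m: "detm S m A" using assms(1) by (auto simp: RR_def)
  obtain n where n: "detm S n B" using assms(2) by (auto simp: RR_def)
  have "detm S (max m n) A" "detm S (max m n) B"
    using detm_mono[OF m, of "max m n"] detm_mono[OF n, of "max m n"] by simp_all
  then have "detm S (max m n) (A - B)" by (rule detm_Diff)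
  then show ?thesis unfolding RR_def by blast
qed

lemma RR_Int: assumes "A \<in> RR S" "B \<in> RR S" shows "A \<inter> B \<in> RR S"
proof -
  have "A \<inter> B = A - (A - B)" by blast
  then show ?thesis using RR_Diff[OF assms(1) RR_Diff[OF assms]] by simp
qed

lemma RR_S: "S \<in> RR S" unfolding RR_def using detm_S by blast
lemma RR_empty: "{} \<in> RR S" unfolding RR_def using detm_empty by blast
lemma RR_sub: "RR S \<subseteq> Pow S" unfolding RR_def detm_def by auto

lemma RR_algebra: "algebra S (RR S)"
proof (rule algebra_iff_Un[THEN iffD2], intro conjI ballI)
  show "RR S \<subseteq> Pow S" by (rule RR_sub)
  show "{} \<in> RR S" by (rule RR_empty)
  fix a assume "a \<in> RR S" then show "S - a \<in> RR S" by (rule RR_Diff[OF RR_S])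
next
  fix a b assume "a \<in> RR S" "b \<in> RR S" then show "a \<union> b \<in> RR S" by (rule RR_Un)
qed

lemma RR_Int_stable: "Int_stable (RR S)"
  unfolding Int_stable_def by (intro ballI RR_Int)

lemma open_cyl: assumes "finite J" shows "open {y::int\<Rightarrow>nat. \<forall>j\<in>J. y j = c j}"
proof -
  have "\<And>i. open {(c::int\<Rightarrow>nat) i}" by (rule discrete_topology_class.open_discrete)
  from product_topology_basis'[of J "\<lambda>j. {c j}" id, OF assms this] show ?thesis by simp
qed

lemma key_cyl_eq: "{y. key m y = key m x} = {y::int\<Rightarrow>nat. \<forall>j\<in>{- int m..int m}. y j = x j}"
proof (rule Collect_cong)
  fix y :: "int \<Rightarrow> nat"
  show "(key m y = key m x) = (\<forall>j\<in>{- int m..int m}. y j = x j)"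
    unfolding key_eq Ball_def atLeastAtMost_iff ..
qed

lemma open_key: "open {y. key m y = key m x}"
  unfolding key_cyl_eq by (rule open_cyl) simp

lemma detm_open: assumes "detm S m B" shows "\<exists>U. open U \<and> B = S \<inter> U"
proof -
  let ?U = "\<Union>x\<in>B. {y. key m y = key m x}"
  have "open ?U" by (intro open_UN ballI open_key)
  moreover have "B = S \<inter> ?U"
  proof
    show "B \<subseteq> S \<inter> ?U" using detm_sub[OF assms] by blast
    show "S \<inter> ?U \<subseteq> B"
    proof
      fix y assume "y \<in> S \<inter> ?U"
      then obtain x where "x \<in> B" "y \<in> S" "key m y = key m x" by blast
      moreover have "x \<in> S" using detm_sub[OF assms] \<open>x \<in> B\<close> by blast
      ultimately show "y \<in> B" using detmD[OF assms, of x y] by simp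
    qed
  qed
  ultimately show ?thesis by blast
qed

lemma RR_sets: assumes "B \<in> RR S" shows "B \<in> sets (restrict_space borel S)"
proof -
  obtain m where "detm S m B" using assms unfolding RR_def by blast
  then obtain U where "open U" "B = S \<inter> U" using detm_open by blast
  then show ?thesis unfolding sets_restrict_space by auto
qed

lemma detm_closed: assumes "detm S m B" "closed S" shows "closed B"
proof -
  have "detm S m (S - B)" by (rule detm_Diff[OF detm_S assms(1)])
  then obtain U where "open U" "S - B = S \<inter> U" using detm_open by blast
  have "B \<subseteq> S" using assms(1) by (rule detm_sub)
  then have "B = S \<inter> (- U)" using \<open>S - B = S \<inter> U\<close> by blast
  moreover have "closed (- U)" using \<open>open U\<close> by (simp add: closed_Compl)
  ultimately show ?thesis using assms(2) by (metis closed_Int)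
qed

lemma nbhd_cyl:
  fixes U :: "(int \<Rightarrow> nat) set"
  assumes "open U" "x \<in> U"
  shows "\<exists>m. \<forall>y. key m y = key m x \<longrightarrow> y \<in> U"
proof -
  have "openin (product_topology (\<lambda>i. euclidean) UNIV) U" using assms(1) unfolding open_fun_def .
  from product_topology_open_contains_basis[OF this assms(2)]
  obtain X where X: "x \<in> (\<Pi>\<^sub>E i\<in>UNIV. X i)" "finite {i. X i \<noteq> topspace euclidean}"
    "(\<Pi>\<^sub>E i\<in>UNIV. X i) \<subseteq> U" by blast
  define J where "J = {i. X i \<noteq> UNIV}"
  have fJ: "finite J" using X(2) unfolding J_def by simp
  define m where "m = nat (Max (insert 0 (abs ` J)))"
  have bnd: "\<bar>j\<bar> \<le> int m" if "j \<in> J" for j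
  proof -
    have "\<bar>j\<bar> \<le> Max (insert 0 (abs ` J))" using fJ that by (intro Max_ge) auto
    then show ?thesis unfolding m_def by linarith
  qed
  show ?thesis
  proof (intro exI allI impI)
    fix y assume "key m y = key m x"
    then have agree: "\<forall>j. - int m \<le> j \<and> j \<le> int m \<longrightarrow> y j = x j" unfolding key_eq by metis
    have "y \<in> (\<Pi>\<^sub>E i\<in>UNIV. X i)"
    proof (simp add: PiE_iff, intro allI)
      fix i show "y i \<in> X i"
      proof (cases "i \<in> J")
        case True
        then have "y i = x i" using agree bnd[OF True] by (simp add: abs_le_iff)
        then show ?thesis using X(1) by (simp add: PiE_iff)
      next
        case False then show ?thesis unfolding J_def by simp
      qed
    qed
    then show "y \<in> U" using X(3) by blast
  qed
qed

lemma sigma_RR: "sigma_sets S (RR S) = sets (restrict_space borel S)"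
proof
  show "sigma_sets S (RR S) \<subseteq> sets (restrict_space borel S)"
    using sets.sigma_sets_subset[of "RR S" "restrict_space borel S"] RR_sets
    by (simp add: space_restrict_space subset_eq)
next
  show "sets (restrict_space borel S) \<subseteq> sigma_sets S (RR S)"
  proof
    fix Z assume "Z \<in> sets (restrict_space borel S)"
    then obtain X where X: "X \<in> sigma_sets UNIV (Collect open)" "Z = S \<inter> X"
      unfolding sets_restrict_space sets_borel by auto
    have "S \<inter> X \<in> sigma_sets S (RR S)" using X(1)
    proof (induct rule: sigma_sets.induct)
      case (Basic a)
      then have oa: "open a" by simp
      define G where "G m = {x\<in>S. \<forall>y\<in>S. key m x = key m y \<longrightarrow> y \<in> a}" for m
      have "G m \<in> RR S" for m
      proof -
        have "detm S m (G m)" unfolding detm_def G_def by auto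
        then show ?thesis unfolding RR_def by blast
      qed
      moreover have "S \<inter> a = (\<Union>m. G m)"
      proof
        show "(\<Union>m. G m) \<subseteq> S \<inter> a" unfolding G_def by blast
        show "S \<inter> a \<subseteq> (\<Union>m. G m)"
        proof
          fix x assume x: "x \<in> S \<inter> a"
          then obtain m where "\<forall>y. key m y = key m x \<longrightarrow> y \<in> a" using nbhd_cyl oa by blast
          then have "x \<in> G m" using x unfolding G_def by auto
          then show "x \<in> (\<Union>m. G m)" by blast
        qed
      qed
      ultimately show ?case by (metis range_subsetD sigma_sets.Basic sigma_sets.Union subsetI)
    next
      case Empty then show ?case by (simp add: sigma_sets.Empty)
    next
      case (Compl a)
      have "S \<inter> (UNIV - a) = S - (S \<inter> a)" by blast
      then show ?case using Compl by (simp add: sigma_sets.Compl)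
    next
      case (Union a)
      have eq: "S \<inter> (\<Union>i. a i) = (\<Union>i. S \<inter> a i)" by blast
      have "(\<Union>i. S \<inter> a i) \<in> sigma_sets S (RR S)" by (intro sigma_sets.Union) (rule Union(2))
      then show ?case unfolding eq .
    qed
    then show "Z \<in> sigma_sets S (RR S)" using X(2) by simp
  qed
qed

lemma open_two: "open {x::int\<Rightarrow>nat. P (x j) (x (j+1))}"
proof -
  let ?C = "\<lambda>p::nat\<times>nat. {x::int\<Rightarrow>nat. \<forall>i\<in>{j, j+1}. x i = (if i = j then fst p else snd p)}"
  have eq: "{x::int\<Rightarrow>nat. P (x j) (x (j+1))} = (\<Union>p\<in>{p. P (fst p) (snd p)}. ?C p)"
  proof
    show "{x::int\<Rightarrow>nat. P (x j) (x (j+1))} \<subseteq> (\<Union>p\<in>{p. P (fst p) (snd p)}. ?C p)"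
    proof
      fix x :: "int \<Rightarrow> nat" assume "x \<in> {x. P (x j) (x (j+1))}"
      then have "(x j, x (j+1)) \<in> {p. P (fst p) (snd p)}" "x \<in> ?C (x j, x (j+1))" by auto
      then show "x \<in> (\<Union>p\<in>{p. P (fst p) (snd p)}. ?C p)" by blast
    qed
    show "(\<Union>p\<in>{p. P (fst p) (snd p)}. ?C p) \<subseteq> {x::int\<Rightarrow>nat. P (x j) (x (j+1))}"
      by auto
  qed
  have "open (?C p)" for p by (rule open_cyl) simp
  then have "open (\<Union>p\<in>{p. P (fst p) (snd p)}. ?C p)" by (intro open_UN ballI)
  then show ?thesis unfolding eq .
qed

lemma closed_SFT: "closed (SFT N M)"
proof -
  have "SFT N M = (\<Inter>j. {x. x j \<in> {1..N} \<and> M (x j) (x (j+1))})" unfolding SFT_def by auto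
  moreover have "closed {x::int\<Rightarrow>nat. x j \<in> {1..N} \<and> M (x j) (x (j+1))}" for j
  proof -
    have "- {x::int\<Rightarrow>nat. x j \<in> {1..N} \<and> M (x j) (x (j+1))} = {x. \<not> (x j \<in> {1..N} \<and> M (x j) (x (j+1)))}" by auto
    then show ?thesis using open_two[of "\<lambda>a b. \<not> (a \<in> {1..N} \<and> M a b)" j] by (simp add: closed_def)
  qed
  ultimately show ?thesis by (simp add: closed_INT)
qed

lemma compact_SFT: "compact (SFT N M)"
proof -
  have "compactin (product_topology (\<lambda>i. euclidean) UNIV) (PiE UNIV (\<lambda>i::int. {1..N::nat}))"
    by (simp add: compactin_PiE finite_imp_compact)
  then have "compact (PiE UNIV (\<lambda>i::int. {1..N::nat}))"
    by (simp add: euclidean_product_topology)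
  then have "compact (PiE UNIV (\<lambda>i::int. {1..N::nat}) \<inter> SFT N M)"
    using closed_SFT by (rule compact_Int_closed)
  moreover have "PiE UNIV (\<lambda>i::int. {1..N::nat}) \<inter> SFT N M = SFT N M"
    unfolding SFT_def by (auto simp: PiE_iff)
  ultimately show ?thesis by simp
qed



definition cylk :: "(int \<Rightarrow> nat) set \<Rightarrow> nat \<Rightarrow> nat list \<Rightarrow> (int \<Rightarrow> nat) set" where
  "cylk S m ks = {x\<in>S. key m x = ks}"

lemma detm_cylk: "detm S m (cylk S m ks)"
proof (rule detmI)
  show "cylk S m ks \<subseteq> S" unfolding cylk_def by blast
  fix x y assume "x \<in> S" "y \<in> S" "key m x = key m y" "x \<in> cylk S m ks"
  then show "y \<in> cylk S m ks" unfolding cylk_def by simp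
qed

lemma RR_cylk: "cylk S m ks \<in> RR S"
  unfolding RR_def using detm_cylk by blast

lemma detm_decomp: assumes "detm S m B" shows "B = (\<Union>ks\<in>key m ` B. cylk S m ks)"
proof
  show "B \<subseteq> (\<Union>ks\<in>key m ` B. cylk S m ks)"
  proof
    fix x assume "x \<in> B"
    moreover then have "x \<in> S" using detm_sub[OF assms] by blast
    ultimately have "x \<in> cylk S m (key m x)" unfolding cylk_def by simp
    then show "x \<in> (\<Union>ks\<in>key m ` B. cylk S m ks)" using \<open>x \<in> B\<close> by blast
  qed
  show "(\<Union>ks\<in>key m ` B. cylk S m ks) \<subseteq> B"
  proof
    fix y assume "y \<in> (\<Union>ks\<in>key m ` B. cylk S m ks)"
    then obtain x where x: "x \<in> B" "y \<in> cylk S m (key m x)" by blast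
    then have "y \<in> S" "key m y = key m x" unfolding cylk_def by simp_all
    moreover have "x \<in> S" using detm_sub[OF assms] x(1) by blast
    ultimately show "y \<in> B" using detmD[OF assms, of x y] x(1) by simp
  qed
qed

lemma disjoint_cylk: "disjoint_family_on (cylk S m) K"
  unfolding disjoint_family_on_def cylk_def by auto

lemma finite_keys: "finite (key m ` SFT N M)"
proof (rule finite_subset)
  show "key m ` SFT N M \<subseteq> {xs. set xs \<subseteq> {1..N} \<and> length xs = 2*m+1}"
  proof
    fix xs assume "xs \<in> key m ` SFT N M"
    then obtain x where x: "x \<in> SFT N M" "xs = key m x" by blast
    have "\<forall>j. x j \<in> {1..N}" using x(1) unfolding SFT_def by blast
    then have "set xs \<subseteq> {1..N}" unfolding x(2) key_def by auto
    moreover have "length xs = 2*m+1" unfolding x(2) key_def by simp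
    ultimately show "xs \<in> {xs. set xs \<subseteq> {1..N} \<and> length xs = 2*m+1}" by blast
  qed
  show "finite {xs. set xs \<subseteq> {1..N::nat} \<and> length xs = 2*m+1}"
    by (rule finite_lists_length_eq) simp
qed

lemma inv_props:
  assumes "\<mu> \<in> invariant_prob S"
  shows "prob_space \<mu>" "space \<mu> = S" "sets \<mu> = sets (restrict_space borel S)"
    "\<And>B. B \<in> sets \<mu> \<Longrightarrow> emeasure \<mu> (shift -` B \<inter> space \<mu>) = emeasure \<mu> B"
    "shift \<in> measurable \<mu> \<mu>"
  using assms unfolding invariant_prob_def by auto

lemma RR_in_sets: assumes "\<mu> \<in> invariant_prob S" "B \<in> RR S" shows "B \<in> sets \<mu>"
  using RR_sets[OF assms(2)] inv_props(3)[OF assms(1)] by simp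

lemma measure_decomp:
  assumes "\<mu> \<in> invariant_prob (SFT N M)" "detm (SFT N M) m B"
  shows "measure \<mu> B = (\<Sum>ks\<in>key m ` B. measure \<mu> (cylk (SFT N M) m ks))"
proof -
  interpret prob_space \<mu> using inv_props(1)[OF assms(1)] .
  have fin: "finite (key m ` B)"
    using finite_keys[of m N M] detm_sub[OF assms(2)] by (meson finite_subset image_mono)
  have "measure \<mu> (\<Union>ks\<in>key m ` B. cylk (SFT N M) m ks) = (\<Sum>ks\<in>key m ` B. measure \<mu> (cylk (SFT N M) m ks))"
    by (rule finite_measure_finite_Union[OF fin]) (use RR_in_sets[OF assms(1) RR_cylk] disjoint_cylk in auto)
  then show ?thesis using detm_decomp[OF assms(2)] by simp
qed

lemma seq_sub:
  fixes \<mu> :: "nat \<Rightarrow> (int \<Rightarrow> nat) measure"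
  assumes "\<And>n. \<mu> n \<in> invariant_prob (SFT N M)"
  shows "\<exists>r. strict_mono r \<and> (\<forall>B\<in>RR (SFT N M). convergent (\<lambda>j. measure (\<mu> (r j)) B))"
proof -
  define S where "S = SFT N M"
  define v where "v n = (\<lambda>p::nat\<times>nat list. measure (\<mu> n) (cylk S (fst p) (snd p)))" for n
  define K where "K = PiE UNIV (\<lambda>_::nat\<times>nat list. {0..1::real})"
  have "compactin (product_topology (\<lambda>i. euclidean) UNIV) K"
    unfolding K_def by (simp add: compactin_PiE)
  then have "compact K" by (simp add: euclidean_product_topology)
  then have sc: "seq_compact K" by (rule compact_imp_seq_compact)
  have "v n \<in> K" for n
  proof -
    interpret prob_space "\<mu> n" using inv_props(1)[OF assms] .
    show ?thesis unfolding K_def v_def by (auto simp: PiE_iff)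
  qed
  then obtain l r where r: "strict_mono r" "(v \<circ> r) \<longlonglongrightarrow> l"
    using sc unfolding seq_compact_def by meson
  have coord: "(\<lambda>j. v (r j) p) \<longlonglongrightarrow> l p" for p
  proof -
    have "((\<lambda>j. (\<lambda>x. x p) ((v \<circ> r) j)) \<longlongrightarrow> (\<lambda>x. x p) l) sequentially"
      by (rule continuous_on_tendsto_compose[OF continuous_on_product_coordinates r(2)]) simp_all
    then show ?thesis by simp
  qed
  have "convergent (\<lambda>j. measure (\<mu> (r j)) B)" if B: "B \<in> RR S" for B
  proof -
    obtain m where m: "detm S m B" using B unfolding RR_def by blast
    have eq: "measure (\<mu> (r j)) B = (\<Sum>ks\<in>key m ` B. v (r j) (m, ks))" for j
      unfolding v_def using measure_decomp[OF assms m[unfolded S_def]] by (simp add: S_def)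
    have "(\<lambda>j. \<Sum>ks\<in>key m ` B. v (r j) (m, ks)) \<longlonglongrightarrow> (\<Sum>ks\<in>key m ` B. l (m, ks))"
      by (intro tendsto_sum coord)
    then show ?thesis unfolding eq convergent_def by blast
  qed
  then show ?thesis using r(1) unfolding S_def by blast
qed

lemma shift_SFT: assumes "x \<in> SFT N M" shows "shift x \<in> SFT N M"
proof -
  have "\<forall>j. x j \<in> {1..N} \<and> M (x j) (x (j + 1))" using assms unfolding SFT_def by blast
  then have "\<forall>j. x (j+1) \<in> {1..N} \<and> M (x (j+1)) (x (j + 1 + 1))" by blast
  then show ?thesis unfolding SFT_def shift_def by simp
qed

lemma detm_shift:
  assumes "detm (SFT N M) m B"
  shows "detm (SFT N M) (Suc m) (shift -` B \<inter> SFT N M)"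
proof (rule detmI)
  show "shift -` B \<inter> SFT N M \<subseteq> SFT N M" by blast
  fix x y assume xy: "x \<in> SFT N M" "y \<in> SFT N M" "key (Suc m) x = key (Suc m) y" "x \<in> shift -` B \<inter> SFT N M"
  have h: "\<forall>j. - int (Suc m) \<le> j \<and> j \<le> int (Suc m) \<longrightarrow> x j = y j" using xy(3) unfolding key_eq .
  have "\<forall>j. - int m \<le> j \<and> j \<le> int m \<longrightarrow> shift x j = shift y j"
  proof (intro allI impI)
    fix j assume "- int m \<le> j \<and> j \<le> int m"
    then have "- int (Suc m) \<le> j + 1 \<and> j + 1 \<le> int (Suc m)" by linarith
    then have "x (j+1) = y (j+1)" using h by blast
    then show "shift x j = shift y j" unfolding shift_def .
  qed
  then have k: "key m (shift x) = key m (shift y)" unfolding key_eq .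
  have "shift y \<in> B" using detmD[OF assms shift_SFT[OF xy(1)] shift_SFT[OF xy(2)] k] xy(4) by simp
  then show "y \<in> shift -` B \<inter> SFT N M" using xy(2) by simp
qed

lemma RR_shift: assumes "B \<in> RR (SFT N M)" shows "shift -` B \<inter> SFT N M \<in> RR (SFT N M)"
proof -
  obtain m where "detm (SFT N M) m B" using assms unfolding RR_def by blast
  then have "detm (SFT N M) (Suc m) (shift -` B \<inter> SFT N M)" by (rule detm_shift)
  then show ?thesis unfolding RR_def by blast
qed

lemma continuous_shift: "continuous_on UNIV shift"
  unfolding shift_def by (intro continuous_on_coordinatewise_then_product continuous_on_product_coordinates)

lemma shift_meas_rs: "shift \<in> measurable (restrict_space borel (SFT N M)) (restrict_space borel (SFT N M))"
proof (rule measurable_restrict_space3)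
  show "shift \<in> borel_measurable borel" by (rule borel_measurable_continuous_onI[OF continuous_shift])
  show "shift \<in> SFT N M \<rightarrow> SFT N M" using shift_SFT by blast
qed

lemma RR_empty_eventually:
  assumes A: "range A \<subseteq> RR (SFT N M)" "decseq A" "(\<Inter>i. A i) = {}"
  shows "\<exists>n. A n = {}"
proof -
  define S where "S = SFT N M"
  have cS: "compact S" unfolding S_def by (rule compact_SFT)
  have clA: "closed (A i)" for i
  proof -
    have "A i \<in> RR S" using A(1) unfolding S_def by blast
    then obtain m where "detm S m (A i)" unfolding RR_def by blast
    then show ?thesis using closed_SFT unfolding S_def by (rule detm_closed)
  qed
  have "S \<subseteq> (\<Union>i\<in>UNIV. - A i)" using A(3) by blast
  moreover have "open (- A i)" for i using clA by (simp add: open_Compl)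
  ultimately obtain C where C: "finite C" "S \<subseteq> (\<Union>i\<in>C. - A i)"
    using cS by (meson compactE_image)
  obtain n where n: "\<forall>i\<in>C. i \<le> n" using C(1) finite_nat_set_iff_bounded_le by blast
  have "A n \<subseteq> S" using A(1) RR_sub unfolding S_def by blast
  moreover have "A n \<subseteq> A i" if "i \<in> C" for i using A(2) n that by (simp add: decseq_def)
  ultimately have "A n = {}" using C(2) by blast
  then show ?thesis by blast
qed

lemma limit_measure:
  fixes \<mu> :: "nat \<Rightarrow> (int \<Rightarrow> nat) measure" and D :: "nat \<Rightarrow> (int \<Rightarrow> nat) set"
  assumes \<mu>: "\<And>n. \<mu> n \<in> invariant_prob (SFT N M)"
    and D: "\<And>k. D k \<in> RR (SFT N M)" "decseq D"
    and bnd: "\<And>k n. k \<le> n \<Longrightarrow> c \<le> measure (\<mu> n) (D k)"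
  shows "\<exists>\<nu>\<in>invariant_prob (SFT N M). c \<le> measure \<nu> (\<Inter>k. D k)"
proof -
  define S where "S = SFT N M"
  obtain r where r: "strict_mono r" "\<And>B. B \<in> RR S \<Longrightarrow> convergent (\<lambda>j. measure (\<mu> (r j)) B)"
    using seq_sub[of \<mu> N M] \<mu> unfolding S_def by blast
  define L where "L B = lim (\<lambda>j. measure (\<mu> (r j)) B)" for B
  have Lt: "(\<lambda>j. measure (\<mu> (r j)) B) \<longlonglongrightarrow> L B" if "B \<in> RR S" for B
    unfolding L_def using r(2)[OF that] by (simp add: convergent_LIMSEQ_iff)
  have muS: "\<mu> n \<in> invariant_prob S" for n using \<mu> unfolding S_def .
  note ip = inv_props[OF muS]
  have L_nonneg: "0 \<le> L B" if "B \<in> RR S" for B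
    by (rule LIMSEQ_le_const[OF Lt[OF that]]) simp
  have L_S: "L S = 1"
  proof -
    have "measure (\<mu> n) S = 1" for n
      using prob_space.prob_space[OF ip(1)[of n]] ip(2)[of n] by simp
    then have "(\<lambda>j. measure (\<mu> (r j)) S) \<longlonglongrightarrow> 1" by simp
    then show ?thesis using Lt[OF RR_S] LIMSEQ_unique by blast
  qed
  have L_empty: "L {} = 0"
  proof -
    have "(\<lambda>j. measure (\<mu> (r j)) {}) \<longlonglongrightarrow> 0" by simp
    then show ?thesis using Lt[OF RR_empty] LIMSEQ_unique by blast
  qed
  have L_add: "L (A \<union> B) = L A + L B" if AB: "A \<in> RR S" "B \<in> RR S" "A \<inter> B = {}" for A B
  proof -
    have "measure (\<mu> n) (A \<union> B) = measure (\<mu> n) A + measure (\<mu> n) B" for n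
    proof -
      interpret prob_space "\<mu> n" by (rule ip(1))
      show ?thesis by (rule finite_measure_Union[OF RR_in_sets[OF muS AB(1)] RR_in_sets[OF muS AB(2)] AB(3)])
    qed
    then have "(\<lambda>j. measure (\<mu> (r j)) (A \<union> B)) \<longlonglongrightarrow> L A + L B"
      using tendsto_add[OF Lt[OF AB(1)] Lt[OF AB(2)]] by simp
    then show ?thesis using Lt[OF RR_Un[OF AB(1,2)]] LIMSEQ_unique by blast
  qed
  have L_shift: "L (shift -` B \<inter> S) = L B" if B: "B \<in> RR S" for B
  proof -
    have Bs: "shift -` B \<inter> S \<in> RR S" using RR_shift B unfolding S_def by blast
    have "measure (\<mu> n) (shift -` B \<inter> S) = measure (\<mu> n) B" for n
      using ip(4)[of B n] ip(2)[of n] RR_in_sets[OF muS B] unfolding measure_def by simp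
    then have "(\<lambda>j. measure (\<mu> (r j)) (shift -` B \<inter> S)) \<longlonglongrightarrow> L B" using Lt[OF B] by simp
    then show ?thesis using Lt[OF Bs] LIMSEQ_unique by blast
  qed
  define f where "f B = ennreal (L B)" for B
  interpret alg: algebra S "RR S" by (rule RR_algebra)
  have pos: "positive (RR S) f" unfolding positive_def f_def L_empty by simp
  have add: "additive (RR S) f" unfolding additive_def f_def
    using L_add L_nonneg by (simp add: ennreal_plus)
  have fin: "\<And>A. A \<in> RR S \<Longrightarrow> f A \<noteq> \<infinity>" unfolding f_def by simp
  have cont: "(\<lambda>i. f (A i)) \<longlonglongrightarrow> 0" if A: "range A \<subseteq> RR S" "decseq A" "(\<Inter>i. A i) = {}" for A
  proof -
    obtain n where n: "A n = {}" using RR_empty_eventually[of A N M] A unfolding S_def by blast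
    have "eventually (\<lambda>i. f (A i) = 0) sequentially"
    proof (rule eventually_sequentiallyI[of n])
      fix i assume "n \<le> i"
      then have "A i \<subseteq> A n" using A(2) by (simp add: decseq_def)
      then have "A i = {}" using n by blast
      then show "f (A i) = 0" unfolding f_def using L_empty by simp
    qed
    then show ?thesis by (rule tendsto_eventually)
  qed
  obtain \<mu>' where \<mu>': "\<forall>s\<in>RR S. \<mu>' s = f s" "measure_space S (sigma_sets S (RR S)) \<mu>'"
    using alg.caratheodory_empty_continuous[OF pos add fin cont] by blast
  define \<nu> where "\<nu> = measure_of S (sigma_sets S (RR S)) \<mu>'"
  have sa: "sigma_algebra S (sigma_sets S (RR S))" by (rule sigma_algebra_sigma_sets[OF RR_sub])
  have sp: "space \<nu> = S" unfolding \<nu>_def by (rule sigma_algebra.space_measure_of_eq[OF sa])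
  have st: "sets \<nu> = sigma_sets S (RR S)" unfolding \<nu>_def by (rule sigma_algebra.sets_measure_of_eq[OF sa])
  have st2: "sets \<nu> = sets (restrict_space borel S)" using st sigma_RR by simp
  have em: "emeasure \<nu> A = \<mu>' A" if "A \<in> sigma_sets S (RR S)" for A
    unfolding \<nu>_def using \<mu>'(2) that by (intro emeasure_measure_of_sigma) (auto simp: measure_space_def)
  have emR: "emeasure \<nu> B = ennreal (L B)" if "B \<in> RR S" for B
    using em[OF sigma_sets.Basic[OF that]] \<mu>'(1) that unfolding f_def by simp
  have RRsets: "B \<in> sets \<nu>" if "B \<in> RR S" for B using st that by (simp add: sigma_sets.Basic)
  have prob: "prob_space \<nu>"
    by (rule prob_spaceI) (simp add: sp emR[OF RR_S] L_S)
  have smeas: "shift \<in> measurable \<nu> \<nu>"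
    using shift_meas_rs[of N M] measurable_cong_sets[OF st2 st2] unfolding S_def by simp
  have dist: "distr \<nu> \<nu> shift = \<nu>"
  proof -
    have e1: "emeasure (distr \<nu> \<nu> shift) X = emeasure \<nu> X" if X: "X \<in> RR S" for X
    proof -
      have Xs: "shift -` X \<inter> S \<in> RR S" using RR_shift X unfolding S_def by blast
      have "emeasure (distr \<nu> \<nu> shift) X = emeasure \<nu> (shift -` X \<inter> space \<nu>)"
        by (rule emeasure_distr[OF smeas RRsets[OF X]])
      also have "\<dots> = ennreal (L (shift -` X \<inter> S))" using emR[OF Xs] sp by simp
      also have "\<dots> = emeasure \<nu> X" using L_shift[OF X] emR[OF X] by simp
      finally show ?thesis .
    qed
    have e2: "sets (distr \<nu> \<nu> shift) = sigma_sets S (RR S)" using st by simp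
    have e3: "range (\<lambda>_::nat. S) \<subseteq> RR S" using RR_S by blast
    have e4: "(\<Union>i::nat. S) = S" by simp
    have e5: "emeasure (distr \<nu> \<nu> shift) S \<noteq> \<infinity>" for i::nat
      using e1[OF RR_S] emR[OF RR_S] by simp
    show ?thesis
      by (rule measure_eqI_generator_eq[OF RR_Int_stable RR_sub e1 e2 st e3 e4 e5])
  qed
  have inv: "emeasure \<nu> (shift -` B \<inter> space \<nu>) = emeasure \<nu> B" if "B \<in> sets \<nu>" for B
  proof -
    have "emeasure \<nu> B = emeasure (distr \<nu> \<nu> shift) B" using dist by simp
    also have "\<dots> = emeasure \<nu> (shift -` B \<inter> space \<nu>)" by (rule emeasure_distr[OF smeas that])
    finally show ?thesis by simp
  qed
  have \<nu>inv: "\<nu> \<in> invariant_prob S"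
    unfolding invariant_prob_def using prob sp st2 smeas inv by blast
  have LD: "c \<le> L (D k)" for k
  proof (rule LIMSEQ_le_const[OF Lt[OF D(1)[unfolded S_def[symmetric]]]])
    show "\<exists>N. \<forall>n\<ge>N. c \<le> measure (\<mu> (r n)) (D k)"
    proof (intro exI allI impI)
      fix n assume "k \<le> n"
      moreover have "n \<le> r n" using r(1) by (rule seq_suble)
      ultimately show "c \<le> measure (\<mu> (r n)) (D k)" using bnd by simp
    qed
  qed
  have mD: "measure \<nu> (D k) = L (D k)" for k
    using emR[OF D(1)[unfolded S_def[symmetric]]] L_nonneg[OF D(1)[unfolded S_def[symmetric]]]
    unfolding measure_def by simp
  interpret nu: prob_space \<nu> by (rule prob)
  have "(\<lambda>k. measure \<nu> (D k)) \<longlonglongrightarrow> measure \<nu> (\<Inter>k. D k)"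
    by (rule nu.finite_Lim_measure_decseq) (use RRsets D(1) D(2) in \<open>auto simp: S_def\<close>)
  then have "c \<le> measure \<nu> (\<Inter>k. D k)"
    by (rule LIMSEQ_le_const) (use LD mD in auto)
  then show ?thesis using \<nu>inv unfolding S_def by blast
qed



lemma sum_shift_aux: "(\<Sum>i<n. f (Suc i)) + f 0 = (\<Sum>i<n. f i) + (f n :: nat)"
  by (induct n) simp_all

lemma shift_pow: "(shift ^^ i) p = (\<lambda>j. p (j + int i))"
proof (induct i)
  case 0 then show ?case by simp
next
  case (Suc i) then show ?case by (simp add: shift_def add.assoc)
qed

lemma invariant_nonempty:
  assumes "N \<ge> 1" "mixing_SFT N M"
  shows "invariant_prob (SFT N M) \<noteq> {}"
proof -
  define S where "S = SFT N M"
  obtain K where K: "\<forall>n\<ge>K. \<forall>i\<in>{1..N}. \<forall>j\<in>{1..N}. admissible_path N M n i j"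
    using assms(2) unfolding mixing_SFT_def by blast
  define n where "n = Suc K"
  have "admissible_path N M n 1 1" using K assms(1) unfolding n_def by simp
  then obtain w where w: "w 0 = 1" "w n = 1" "\<forall>k\<le>n. w k \<in> {1..N}" "\<forall>k<n. M (w k) (w (Suc k))"
    unfolding admissible_path_def by blast
  have npos: "n > 0" unfolding n_def by simp
  define p where "p j = w (nat (j mod int n))" for j
  have pnext: "p (j + 1) = w (Suc (nat (j mod int n)))" for j
  proof -
    define q where "q = j mod int n"
    have q: "0 \<le> q" "q < int n" unfolding q_def using npos by simp_all
    have "(j + 1) mod int n = (q + 1) mod int n" unfolding q_def by (simp add: mod_add_left_eq)
    show ?thesis
    proof (cases "q + 1 < int n")
      case True
      then have "(q + 1) mod int n = q + 1" using q by simp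
      then have "nat ((j + 1) mod int n) = Suc (nat q)" using \<open>(j + 1) mod int n = (q + 1) mod int n\<close> q by simp
      then show ?thesis unfolding p_def q_def by simp
    next
      case False
      then have "q + 1 = int n" using q by simp
      then have "(j + 1) mod int n = 0" using \<open>(j + 1) mod int n = (q + 1) mod int n\<close> by simp
      moreover have "Suc (nat q) = n" using \<open>q + 1 = int n\<close> q by simp
      ultimately show ?thesis unfolding p_def q_def using w(1,2) by simp
    qed
  qed
  have pS: "p \<in> S"
    unfolding S_def SFT_def
  proof (intro CollectI allI conjI)
    fix j
    have a: "nat (j mod int n) < n" using npos by (simp add: nat_less_iff)
    show "p j \<in> {1..N}" unfolding p_def using w(3) a by simp
    show "M (p j) (p (j + 1))" unfolding pnext unfolding p_def using w(4) a by simp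
  qed
  define orb where "orb i = (shift ^^ i) p" for i
  have orbS: "orb i \<in> S" for i
    unfolding orb_def by (induct i) (simp_all add: pS shift_SFT[of _ N M, folded S_def])
  have orbn: "orb n = orb 0"
  proof -
    have "p (j + int n) = p j" for j unfolding p_def by simp
    then show ?thesis unfolding orb_def shift_pow by simp
  qed
  have orbSuc: "shift (orb i) = orb (Suc i)" for i unfolding orb_def by simp
  define P where "P = measure_pmf (pmf_of_set {..<n})"
  have ne: "{..<n} \<noteq> {}" using npos by auto
  define \<mu> where "\<mu> = distr P (restrict_space borel S) orb"
  have meas: "orb \<in> measurable P (restrict_space borel S)"
    unfolding P_def using orbS by (simp add: space_restrict_space)
  have sp: "space \<mu> = S" unfolding \<mu>_def by (simp add: space_restrict_space)
  have st: "sets \<mu> = sets (restrict_space borel S)" unfolding \<mu>_def by simp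
  have prob: "prob_space \<mu>"
    unfolding \<mu>_def P_def by (rule prob_space.prob_space_distr[OF prob_space_measure_pmf meas[unfolded P_def]])
  have smeas: "shift \<in> measurable \<mu> \<mu>"
    using shift_meas_rs[of N M] measurable_cong_sets[OF st st] unfolding S_def by simp
  have cnt: "card ({..<n} \<inter> {i. orb (Suc i) \<in> B}) = card ({..<n} \<inter> {i. orb i \<in> B})" for B
  proof -
    define h where "h i = (if orb i \<in> B then 1 else 0::nat)" for i
    have c1: "card ({..<n} \<inter> {i. orb (Suc i) \<in> B}) = (\<Sum>i<n. h (Suc i))"
      unfolding h_def by (simp add: Int_def sum.If_cases)
    have c2: "card ({..<n} \<inter> {i. orb i \<in> B}) = (\<Sum>i<n. h i)"
      unfolding h_def by (simp add: Int_def sum.If_cases)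
    have "h n = h 0" unfolding h_def using orbn by simp
    then show ?thesis unfolding c1 c2 using sum_shift_aux[of h n] by simp
  qed
  have inv: "emeasure \<mu> (shift -` B \<inter> space \<mu>) = emeasure \<mu> B" if B: "B \<in> sets \<mu>" for B
  proof -
    have B2: "shift -` B \<inter> space \<mu> \<in> sets \<mu>" using smeas B by (rule measurable_sets)
    have "emeasure \<mu> (shift -` B \<inter> space \<mu>) = emeasure P (orb -` (shift -` B \<inter> S) \<inter> space P)"
      unfolding \<mu>_def using emeasure_distr[OF meas] B2 sp st unfolding \<mu>_def by simp
    also have "orb -` (shift -` B \<inter> S) \<inter> space P = {i. orb (Suc i) \<in> B}"
      using orbS orbSuc unfolding P_def by auto
    also have "emeasure P {i. orb (Suc i) \<in> B} = emeasure P {i. orb i \<in> B}"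
      unfolding P_def emeasure_pmf_of_set[OF ne finite_lessThan] cnt ..
    also have "{i. orb i \<in> B} = orb -` B \<inter> space P" unfolding P_def by auto
    also have "emeasure P (orb -` B \<inter> space P) = emeasure \<mu> B"
      unfolding \<mu>_def using emeasure_distr[OF meas] B st unfolding \<mu>_def by simp
    finally show ?thesis .
  qed
  have "\<mu> \<in> invariant_prob S"
    unfolding invariant_prob_def using prob sp st smeas inv by blast
  then show ?thesis unfolding S_def by blast
qed



lemma cyl_key: "cylinder S m x = {y\<in>S. key m y = key m x}"
  by (simp only: cylinder_def key_eq)

lemma self_cyl: "x \<in> S \<Longrightarrow> x \<in> cylinder S m x"
  unfolding cyl_key by simp

lemma cyl_sub: "cylinder S m w \<subseteq> S"
  unfolding cylinder_def by blast

lemma mem_cyl: assumes "x \<in> cylinder S m w" shows "cylinder S m w = cylinder S m x"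
proof -
  have "key m x = key m w" using assms unfolding cyl_key by simp
  then show ?thesis unfolding cyl_key by simp
qed

lemma cyl_same: assumes "key m x = key m y" shows "cylinder S m x = cylinder S m y"
  unfolding cyl_key using assms by simp

lemma cyl_mono: assumes "m \<le> n" shows "cylinder S n x \<subseteq> cylinder S m x"
proof
  fix y assume "y \<in> cylinder S n x"
  then have y: "y \<in> S" "\<forall>j. - int n \<le> j \<and> j \<le> int n \<longrightarrow> y j = x j" unfolding cylinder_def by simp_all
  have "\<forall>j. - int m \<le> j \<and> j \<le> int m \<longrightarrow> y j = x j"
  proof (intro allI impI)
    fix j assume "- int m \<le> j \<and> j \<le> int m"
    then have "- int n \<le> j \<and> j \<le> int n" using assms by linarith
    then show "y j = x j" using y(2) by simp
  qed
  then show "y \<in> cylinder S m x" using y(1) unfolding cylinder_def by simp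
qed

lemma outer_char: assumes "x \<in> S"
  shows "x \<in> outer_approx S A m \<longleftrightarrow> cylinder S m x \<inter> A \<noteq> {}"
proof
  assume "x \<in> outer_approx S A m"
  then obtain C where C: "is_cylinder S m C" "C \<inter> A \<noteq> {}" "x \<in> C" unfolding outer_approx_def by blast
  then obtain w where "C = cylinder S m w" unfolding is_cylinder_def by blast
  then have "C = cylinder S m x" using mem_cyl[of x S m w] C(3) by simp
  then show "cylinder S m x \<inter> A \<noteq> {}" using C(2) by simp
next
  assume h: "cylinder S m x \<inter> A \<noteq> {}"
  have "is_cylinder S m (cylinder S m x)" unfolding is_cylinder_def using self_cyl[OF assms] by blast
  then show "x \<in> outer_approx S A m" unfolding outer_approx_def using h self_cyl[OF assms] by blast
qed

lemma inner_char: assumes "x \<in> S"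
  shows "x \<in> inner_approx S A m \<longleftrightarrow> cylinder S m x \<subseteq> A"
proof
  assume "x \<in> inner_approx S A m"
  then obtain C where C: "is_cylinder S m C" "C \<subseteq> A" "x \<in> C" unfolding inner_approx_def by blast
  then obtain w where "C = cylinder S m w" unfolding is_cylinder_def by blast
  then have "C = cylinder S m x" using mem_cyl[of x S m w] C(3) by simp
  then show "cylinder S m x \<subseteq> A" using C(2) by simp
next
  assume h: "cylinder S m x \<subseteq> A"
  have "is_cylinder S m (cylinder S m x)" unfolding is_cylinder_def using self_cyl[OF assms] by blast
  then show "x \<in> inner_approx S A m" unfolding inner_approx_def using h self_cyl[OF assms] by blast
qed

lemma outer_sub: "outer_approx S A m \<subseteq> S"
  unfolding outer_approx_def is_cylinder_def using cyl_sub by blast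

lemma diff_char: assumes "x \<in> S"
  shows "x \<in> diff_approx S A m \<longleftrightarrow> cylinder S m x \<inter> A \<noteq> {} \<and> \<not> cylinder S m x \<subseteq> A"
  unfolding diff_approx_def using outer_char[OF assms] inner_char[OF assms] by blast

lemma diff_sub: "diff_approx S A m \<subseteq> S"
  unfolding diff_approx_def using outer_sub by blast

lemma detm_diff: "detm S m (diff_approx S A m)"
proof (rule detmI)
  show "diff_approx S A m \<subseteq> S" by (rule diff_sub)
  fix x y assume xy: "x \<in> S" "y \<in> S" "key m x = key m y" "x \<in> diff_approx S A m"
  have eq: "cylinder S m x = cylinder S m y" using xy(3) by (rule cyl_same)
  have "cylinder S m x \<inter> A \<noteq> {} \<and> \<not> cylinder S m x \<subseteq> A" using xy(4) diff_char[OF xy(1)] by blast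
  then have "cylinder S m y \<inter> A \<noteq> {} \<and> \<not> cylinder S m y \<subseteq> A" unfolding eq .
  then show "y \<in> diff_approx S A m" using diff_char[OF xy(2)] by blast
qed

lemma decseq_diff: "decseq (\<lambda>m. diff_approx S A m)"
  unfolding decseq_def
proof (intro allI impI subsetI)
  fix m n x assume mn: "m \<le> n" and x: "x \<in> diff_approx S A n"
  have xS: "x \<in> S" using x diff_sub by blast
  have sub: "cylinder S n x \<subseteq> cylinder S m x" using mn by (rule cyl_mono)
  have h: "cylinder S n x \<inter> A \<noteq> {} \<and> \<not> cylinder S n x \<subseteq> A" using x diff_char[OF xS, of A n] by blast
  have "cylinder S m x \<inter> A \<noteq> {}" using h sub by blast
  moreover have "\<not> cylinder S m x \<subseteq> A" using h sub by blast
  ultimately show "x \<in> diff_approx S A m" using diff_char[OF xS, of A m] by blast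
qed

lemma inter_diff_boundary:
  "(\<Inter>m. diff_approx (SFT N M) A m) \<subseteq> topo_boundary (SFT N M) A"
proof
  define S where "S = SFT N M"
  fix x assume x: "x \<in> (\<Inter>m. diff_approx (SFT N M) A m)"
  then have xS: "x \<in> S" using diff_sub unfolding S_def by blast
  have xD: "cylinder S m x \<inter> A \<noteq> {} \<and> \<not> cylinder S m x \<subseteq> A" for m
    using x diff_char[OF xS] unfolding S_def by blast
  have nb: "\<exists>m. cylinder S m x \<subseteq> T" if T: "x \<in> T" "openin (top_of_set S) T" for T
  proof -
    obtain U where U: "open U" "T = S \<inter> U" using T(2) unfolding openin_open by blast
    obtain m where m: "\<forall>y. key m y = key m x \<longrightarrow> y \<in> U" using nbhd_cyl[OF U(1)] T(1) U(2) by blast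
    have "cylinder S m x \<subseteq> S \<inter> U"
    proof
      fix y assume "y \<in> cylinder S m x"
      then have "y \<in> S" "key m y = key m x" unfolding cyl_key by simp_all
      then show "y \<in> S \<inter> U" using m by blast
    qed
    then show ?thesis using U(2) by blast
  qed
  have c1: "x \<in> top_of_set S closure_of A"
    unfolding in_closure_of
  proof (intro conjI allI impI)
    show "x \<in> topspace (top_of_set S)" using xS by simp
    fix T assume "x \<in> T \<and> openin (top_of_set S) T"
    then obtain m where "cylinder S m x \<subseteq> T" using nb by blast
    then show "\<exists>y. y \<in> A \<and> y \<in> T" using xD[of m] by blast
  qed
  have c2: "x \<in> top_of_set S closure_of (S - A)"
    unfolding in_closure_of
  proof (intro conjI allI impI)
    show "x \<in> topspace (top_of_set S)" using xS by simp
    fix T assume "x \<in> T \<and> openin (top_of_set S) T"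
    then obtain m where "cylinder S m x \<subseteq> T" using nb by blast
    then show "\<exists>y. y \<in> S - A \<and> y \<in> T" using xD[of m] cyl_sub[of S m x] by blast
  qed
  show "x \<in> topo_boundary (SFT N M) A" using c1 c2 unfolding topo_boundary_def S_def by blast
qed

lemma boundary_sets: "topo_boundary S A \<in> sets (restrict_space borel S)"
proof -
  have "closedin (top_of_set S) (topo_boundary S A)"
    unfolding topo_boundary_def by (intro closedin_Int closedin_closure_of)
  then obtain F where "closed F" "topo_boundary S A = S \<inter> F" unfolding closedin_closed by blast
  then show ?thesis unfolding sets_restrict_space by auto
qed

theorem lemma6p1:
  fixes N :: nat and M :: "nat \<Rightarrow> nat \<Rightarrow> bool" and A :: "(int \<Rightarrow> nat) set"
  assumes "N \<ge> 1"
    and "mixing_SFT N M"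
    and "A \<subseteq> SFT N M"
    and "openin (top_of_set (SFT N M)) A"
    and "\<forall>\<mu>\<in>invariant_prob (SFT N M). measure \<mu> (topo_boundary (SFT N M) A) = 0"
  shows "(\<lambda>m. rho (SFT N M) (diff_approx (SFT N M) A m)) \<longlonglongrightarrow> 0"
proof -
  define S where "S = SFT N M"
  define IP where "IP = invariant_prob S"
  define D where "D m = diff_approx S A m" for m
  have IPne: "IP \<noteq> {}" unfolding IP_def S_def by (rule invariant_nonempty[OF assms(1,2)])
  have bdd: "bdd_above ((\<lambda>\<mu>. measure \<mu> X) ` IP)" for X
  proof (rule bdd_aboveI[of _ 1])
    fix y assume "y \<in> (\<lambda>\<mu>. measure \<mu> X) ` IP"
    then obtain \<mu> where "\<mu> \<in> IP" "y = measure \<mu> X" by blast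
    then show "y \<le> 1" using prob_space.prob_le_1[OF inv_props(1)] unfolding IP_def by blast
  qed
  have rho_eq: "rho S X = (SUP \<mu>\<in>IP. measure \<mu> X)" for X unfolding rho_def IP_def ..
  have rho_nn: "0 \<le> rho S X" for X
  proof -
    obtain \<mu> where "\<mu> \<in> IP" using IPne by blast
    then have "measure \<mu> X \<le> rho S X" unfolding rho_eq using bdd by (rule cSUP_upper)
    then show ?thesis using measure_nonneg[of \<mu> X] by linarith
  qed
  have DRR: "D m \<in> RR S" for m unfolding D_def RR_def using detm_diff by blast
  have Ddec: "decseq D" unfolding D_def by (rule decseq_diff)
  show ?thesis
  proof (rule ccontr)
    assume nc: "\<not> (\<lambda>m. rho (SFT N M) (diff_approx (SFT N M) A m)) \<longlonglongrightarrow> 0"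
    then have "\<not> (\<lambda>m. rho S (D m)) \<longlonglongrightarrow> 0" unfolding S_def D_def .
    then obtain r where r: "r > 0" "\<forall>n0. \<exists>n\<ge>n0. \<not> dist (rho S (D n)) 0 < r"
      unfolding lim_sequentially by blast
    have "\<forall>k. \<exists>\<mu>. \<mu> \<in> IP \<and> (\<exists>n\<ge>k. r / 2 < measure \<mu> (D n))"
    proof
      fix k
      obtain n where n: "n \<ge> k" "\<not> dist (rho S (D n)) 0 < r" using r(2) by blast
      then have "r \<le> rho S (D n)" using rho_nn[of "D n"] by simp
      then have "r / 2 < (SUP \<mu>\<in>IP. measure \<mu> (D n))" using r(1) unfolding rho_eq by linarith
      then obtain \<mu> where "\<mu> \<in> IP" "r / 2 < measure \<mu> (D n)"
        using less_cSUP_iff[OF IPne bdd] by blast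
      then show "\<exists>\<mu>. \<mu> \<in> IP \<and> (\<exists>n\<ge>k. r / 2 < measure \<mu> (D n))" using n(1) by blast
    qed
    then obtain \<mu> where \<mu>: "\<And>k. \<mu> k \<in> IP" "\<And>k. \<exists>n\<ge>k. r / 2 < measure (\<mu> k) (D n)" by metis
    have bnd: "r / 2 \<le> measure (\<mu> n) (D k)" if "k \<le> n" for k n
    proof -
      obtain n' where n': "n' \<ge> n" "r / 2 < measure (\<mu> n) (D n')" using \<mu>(2) by blast
      have "D n' \<subseteq> D k" using Ddec n'(1) that by (simp add: decseq_def)
      moreover interpret prob_space "\<mu> n" using inv_props(1) \<mu>(1)[of n] unfolding IP_def by blast
      have "D k \<in> sets (\<mu> n)" using RR_in_sets[OF \<mu>(1)[of n, unfolded IP_def] DRR] .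
      ultimately have "measure (\<mu> n) (D n') \<le> measure (\<mu> n) (D k)" by (rule finite_measure_mono)
      then show ?thesis using n'(2) by linarith
    qed
    obtain \<nu> where \<nu>: "\<nu> \<in> invariant_prob (SFT N M)" "r / 2 \<le> measure \<nu> (\<Inter>k. D k)"
      using limit_measure[of \<mu> N M D "r / 2"] \<mu>(1) DRR Ddec bnd unfolding IP_def S_def by blast
    have sub: "(\<Inter>k. D k) \<subseteq> topo_boundary S A"
      unfolding D_def S_def by (rule inter_diff_boundary)
    interpret nu: prob_space \<nu> using inv_props(1)[OF \<nu>(1)] .
    have bs: "topo_boundary S A \<in> sets \<nu>"
      using boundary_sets[of S A] inv_props(3)[OF \<nu>(1)] unfolding S_def by simp
    have "measure \<nu> (\<Inter>k. D k) \<le> measure \<nu> (topo_boundary S A)"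
      by (rule nu.finite_measure_mono[OF sub bs])
    moreover have "measure \<nu> (topo_boundary S A) = 0" using assms(5) \<nu>(1) unfolding S_def by blast
    ultimately show False using \<nu>(2) r(1) by linarith
  qed
qed


end
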